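(* Consider the non-parametric weighted random graph mixture model with $Q\ge2$ groups. If the measures $\mu_{ql}$, $1\le q\le l\le Q$, are linearly independent, then the parameters $\{\pi_q\}_{1\le q\le Q}$ and $\{\mu_{ql}=(1-p_{ql})\delta_0+p_{ql}F_{ql}\}_{1\le q,l\le Q}$ are identifiable, up to label swapping, from the joint distribution of $K_9$.
   Context: Random graph mixture model: nodes have i.i.d. latent groups $Z_i\in\{1,\dots,Q\}$ with $\pi_q=\mathbb P(Z_i=q)\in(0,1)$, $\sum_q\pi_q=1$; edge variables $X_{ij}$ ($i<j$) are conditionally independent given all $Z$'s, with law of $X_{ij}$ depending only on $(Z_i,Z_j)$. Non-parametric weighted model: $X_{ij}$ takes values in $\mathbb R$ (or $\mathbb R^s$) and, given $Z_i=q,Z_j=l$, has law $\mu_{ql}=(1-p_{ql})\delta_0+p_{ql}F_{ql}$, where $p_{ql}\in(0,1]$, $\delta_0$ is the Dirac mass at $0$, $F_{ql}$ is an absolutely continuous probability measure, and $\mu_{ql}=\mu_{lq}$. $K_n$ denotes the collection of the $\binom n2$ edge variables among $n$ nodes. "Up to label swapping" means up to a permutation of $\{1,\dots,Q\}$ applied simultaneously to all group-indexed parameters. *)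

theory Defs
  imports "HOL-Probability.Probability"
begin

text \<open>Nodes of K_n are 0..n-1; edge variables are indexed by pairs (i,j) with i < j < n.\<close>
definition edges :: "nat \<Rightarrow> (nat \<times> nat) set" where
  "edges n = {(i, j). i < j \<and> j < n}"

definition np_edge_law :: "'a::euclidean_space measure \<Rightarrow> bool" where
  "np_edge_law m \<longleftrightarrow> sets m = sets borel \<and> prob_space m \<and>
     (\<exists>p F. 0 < p \<and> p \<le> 1 \<and> prob_space F \<and> sets F = sets borel \<and>
        absolutely_continuous lborel F \<and>
        (\<forall>A\<in>sets borel. measure m A = (1 - p) * (indicator A 0 :: real) + p * measure F A))"

definition np_wrgmm_param ::
  "nat \<Rightarrow> (nat \<Rightarrow> real) \<Rightarrow> (nat \<Rightarrow> nat \<Rightarrow> 'a::euclidean_space measure) \<Rightarrow> bool" where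
  "np_wrgmm_param Q \<pi> \<mu> \<longleftrightarrow>
     (\<forall>q\<in>{1..Q}. 0 < \<pi> q \<and> \<pi> q < 1) \<and> (\<Sum>q=1..Q. \<pi> q) = 1 \<and>
     (\<forall>q\<in>{1..Q}. \<forall>l\<in>{1..Q}. \<mu> q l = \<mu> l q \<and> np_edge_law (\<mu> q l))"

definition measures_lin_indep ::
  "nat \<Rightarrow> (nat \<Rightarrow> nat \<Rightarrow> 'a::euclidean_space measure) \<Rightarrow> bool" where
  "measures_lin_indep Q \<mu> \<longleftrightarrow>
     (\<forall>c :: nat \<Rightarrow> nat \<Rightarrow> real.
        (\<forall>A\<in>sets borel. (\<Sum>(q, l)\<in>{(q, l). 1 \<le> q \<and> q \<le> l \<and> l \<le> Q}. c q l * measure (\<mu> q l) A) = 0)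
        \<longrightarrow> (\<forall>q l. 1 \<le> q \<and> q \<le> l \<and> l \<le> Q \<longrightarrow> c q l = 0))"

text \<open>Joint distribution of the edge variables of K_n: Z_i i.i.d. with law pi on {1..Q},
  and given Z the X_ij (i<j) independent with laws mu_{Z_i Z_j}.\<close>
definition joint_law ::
  "nat \<Rightarrow> (nat \<Rightarrow> real) \<Rightarrow> (nat \<Rightarrow> nat \<Rightarrow> 'a::euclidean_space measure) \<Rightarrow> nat
     \<Rightarrow> (nat \<times> nat \<Rightarrow> 'a) set \<Rightarrow> real" where
  "joint_law Q \<pi> \<mu> n A =
     (\<Sum>z\<in>{..<n} \<rightarrow>\<^sub>E {1..Q}. (\<Prod>i<n. \<pi> (z i)) *
        measure (PiM (edges n) (\<lambda>e. \<mu> (z (fst e)) (z (snd e)))) A)"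

end

theory Submission
  imports Defs
begin

lemma edge_law_facts:
  assumes "np_edge_law (m :: 'a::euclidean_space measure)"
  shows "prob_space m" "sets m = sets borel" "space m = UNIV" "measure m UNIV = 1"
proof -
  show p: "prob_space m" and s: "sets m = sets borel" using assms by (auto simp: np_edge_law_def)
  show sp: "space m = UNIV" using sets_eq_imp_space_eq[OF s] by simp
  show "measure m UNIV = 1" using prob_space.prob_space[OF p] sp by simp
qed

lemma joint_law_cyl:
  fixes \<mu> :: "nat \<Rightarrow> nat \<Rightarrow> 'a::euclidean_space measure"
  assumes P: "np_wrgmm_param Q \<pi> \<mu>" and J: "J \<subseteq> edges n" "finite J"
    and X: "\<And>e. e \<in> J \<Longrightarrow> X e \<in> sets borel"
  shows "joint_law Q \<pi> \<mu> n (prod_emb (edges n) (\<lambda>_. borel) J (Pi\<^sub>E J X)) =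
    (\<Sum>z\<in>{..<n} \<rightarrow>\<^sub>E {1..Q}. (\<Prod>i<n. \<pi> (z i)) *
        (\<Prod>e\<in>J. measure (\<mu> (z (fst e)) (z (snd e))) (X e)))"
  unfolding joint_law_def
proof (rule sum.cong[OF refl])
  fix z assume z: "z \<in> {..<n} \<rightarrow>\<^sub>E {1..Q}"
  let ?M = "\<lambda>e. \<mu> (z (fst e)) (z (snd e))"
  have law: "np_edge_law (?M e)" if "e \<in> edges n" for e
  proof -
    have "fst e < n" "snd e < n" using that by (auto simp: edges_def)
    then have "z (fst e) \<in> {1..Q}" "z (snd e) \<in> {1..Q}" using PiE_mem[OF z] by simp_all
    then show ?thesis using P by (auto simp: np_wrgmm_param_def)
  qed
  have emb: "prod_emb (edges n) (\<lambda>_. borel) J (Pi\<^sub>E J X) = prod_emb (edges n) ?M J (Pi\<^sub>E J X)"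
    using edge_law_facts(3)[OF law] by (auto simp: prod_emb_def)
  have "emeasure (PiM (edges n) ?M) (prod_emb (edges n) ?M J (Pi\<^sub>E J X)) = (\<Prod>e\<in>J. emeasure (?M e) (X e))"
    apply (rule emeasure_PiM_emb)
    using edge_law_facts[OF law] J X by auto
  also have "\<dots> = (\<Prod>e\<in>J. ennreal (measure (?M e) (X e)))"
  proof (rule prod.cong[OF refl])
    fix e assume "e \<in> J"
    then have "e \<in> edges n" using J by blast
    then have "finite_measure (?M e)" using edge_law_facts(1)[OF law] prob_space.finite_measure by blast
    then show "emeasure (?M e) (X e) = ennreal (measure (?M e) (X e))"
      by (rule finite_measure.emeasure_eq_measure)
  qed
  also have "\<dots> = ennreal (\<Prod>e\<in>J. measure (?M e) (X e))"
    by (simp add: prod_ennreal)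
  finally have "measure (PiM (edges n) ?M) (prod_emb (edges n) ?M J (Pi\<^sub>E J X)) = (\<Prod>e\<in>J. measure (?M e) (X e))"
    by (simp add: measure_def prod_nonneg)
  then show "(\<Prod>i<n. \<pi> (z i)) * measure (PiM (edges n) ?M) (prod_emb (edges n) (\<lambda>_. borel) J (Pi\<^sub>E J X)) =
     (\<Prod>i<n. \<pi> (z i)) * (\<Prod>e\<in>J. measure (?M e) (X e))" using emb by simp
qed

definition ind :: "nat \<Rightarrow> nat \<Rightarrow> real" where "ind x y = (if x = y then 1 else 0)"

lemma sum_ind1: "finite S \<Longrightarrow> a \<in> S \<Longrightarrow> (\<Sum>s\<in>S. f s * ind s a) = f a"
proof -
  assume "finite S" "a \<in> S"
  have "(\<Sum>s\<in>S. f s * ind s a) = (\<Sum>s\<in>S. if s = a then f s else 0)" by (rule sum.cong) (auto simp: ind_def)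
  then show ?thesis using \<open>finite S\<close> \<open>a \<in> S\<close> by simp
qed

lemma sum_ind2: "finite S \<Longrightarrow> a \<in> S \<Longrightarrow> (\<Sum>s\<in>S. ind a s * f s) = f a"
proof -
  assume "finite S" "a \<in> S"
  have "(\<Sum>s\<in>S. ind a s * f s) = (\<Sum>s\<in>S. if a = s then f s else 0)" by (rule sum.cong) (auto simp: ind_def)
  then show ?thesis using \<open>finite S\<close> \<open>a \<in> S\<close> by simp
qed

lemma prod9: "(\<Prod>i<(9::nat). F i) = F 0 * F 1 * F 2 * F 3 * (\<Prod>i\<in>{4..<9}. F i)"
proof -
  have "{..<(9::nat)} = {0,1,2,3} \<union> {4..<9}" by auto
  then show ?thesis by (simp add: prod.union_disjoint mult.assoc)
qed

lemma swap5:
  "(\<Sum>z\<in>P. \<Sum>a\<in>S. \<Sum>b\<in>S. \<Sum>c\<in>S. \<Sum>d\<in>S. f z a b c d) =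
   (\<Sum>a\<in>S. \<Sum>b\<in>S. \<Sum>c\<in>S. \<Sum>d\<in>S. \<Sum>z\<in>P. f z a b c d)"
proof -
  have "(\<Sum>z\<in>P. \<Sum>a\<in>S. \<Sum>b\<in>S. \<Sum>c\<in>S. \<Sum>d\<in>S. f z a b c d) =
     (\<Sum>a\<in>S. \<Sum>z\<in>P. \<Sum>b\<in>S. \<Sum>c\<in>S. \<Sum>d\<in>S. f z a b c d)" by (rule sum.swap)
  also have "\<dots> = (\<Sum>a\<in>S. \<Sum>b\<in>S. \<Sum>z\<in>P. \<Sum>c\<in>S. \<Sum>d\<in>S. f z a b c d)"
    by (rule sum.cong[OF refl], rule sum.swap)
  also have "\<dots> = (\<Sum>a\<in>S. \<Sum>b\<in>S. \<Sum>c\<in>S. \<Sum>z\<in>P. \<Sum>d\<in>S. f z a b c d)"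
    by (rule sum.cong[OF refl], rule sum.cong[OF refl], rule sum.swap)
  also have "\<dots> = (\<Sum>a\<in>S. \<Sum>b\<in>S. \<Sum>c\<in>S. \<Sum>d\<in>S. \<Sum>z\<in>P. f z a b c d)"
    by (rule sum.cong[OF refl], rule sum.cong[OF refl], rule sum.cong[OF refl], rule sum.swap)
  finally show ?thesis .
qed

lemma sum_out4:
  fixes \<pi> :: "nat \<Rightarrow> real"
  assumes S: "finite S" and one: "(\<Sum>s\<in>S. \<pi> s) = 1"
  shows "(\<Sum>z\<in>{..<9::nat} \<rightarrow>\<^sub>E S. (\<Prod>i<9. \<pi> (z i)) * G (z 0) (z 1) (z 2) (z 3)) =
    (\<Sum>a\<in>S. \<Sum>b\<in>S. \<Sum>c\<in>S. \<Sum>d\<in>S. \<pi> a * \<pi> b * \<pi> c * \<pi> d * G a b c d)"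
proof -
  define w where "w a b c d i s = (if i = (0::nat) then ind s a else if i = 1 then ind s b
     else if i = 2 then ind s c else if i = 3 then ind s d else 1)" for a b c d i s
  have w4: "(\<Prod>i\<in>{4..<9}. F i * w a b c d i (y i)) = (\<Prod>i\<in>{4..<9}. F i)" for a b c d F y
    by (rule prod.cong) (simp_all add: w_def)
  let ?P = "{..<9::nat} \<rightarrow>\<^sub>E S"
  have 1: "(\<Prod>i<9. \<pi> (z i)) * G (z 0) (z 1) (z 2) (z 3) =
     (\<Sum>a\<in>S. \<Sum>b\<in>S. \<Sum>c\<in>S. \<Sum>d\<in>S. G a b c d * (\<Prod>i<9. \<pi> (z i) * w a b c d i (z i)))"
    if z: "z \<in> ?P" for z
  proof -
    have zS: "z 0 \<in> S" "z 1 \<in> S" "z 2 \<in> S" "z 3 \<in> S" using PiE_mem[OF z] by simp_all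
    have e: "(\<Prod>i<9. \<pi> (z i) * w a b c d i (z i)) = (\<Prod>i<9. \<pi> (z i)) * (ind (z 0) a * (ind (z 1) b * (ind (z 2) c * ind (z 3) d)))" for a b c d
      unfolding prod9 by (simp add: w_def mult_ac)
    have "(\<Sum>a\<in>S. \<Sum>b\<in>S. \<Sum>c\<in>S. \<Sum>d\<in>S. G a b c d * (\<Prod>i<9. \<pi> (z i) * w a b c d i (z i)))
       = (\<Prod>i<9. \<pi> (z i)) * (\<Sum>a\<in>S. ind (z 0) a * (\<Sum>b\<in>S. ind (z 1) b * (\<Sum>c\<in>S. ind (z 2) c * (\<Sum>d\<in>S. ind (z 3) d * G a b c d))))"
      unfolding e by (simp only: sum_distrib_left mult_ac)
    also have "\<dots> = (\<Prod>i<9. \<pi> (z i)) * G (z 0) (z 1) (z 2) (z 3)"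
      by (simp only: sum_ind2[OF S zS(1)] sum_ind2[OF S zS(2)] sum_ind2[OF S zS(3)] sum_ind2[OF S zS(4)])
    finally show ?thesis by simp
  qed
  have "(\<Sum>z\<in>?P. (\<Prod>i<9. \<pi> (z i)) * G (z 0) (z 1) (z 2) (z 3)) =
     (\<Sum>z\<in>?P. \<Sum>a\<in>S. \<Sum>b\<in>S. \<Sum>c\<in>S. \<Sum>d\<in>S. G a b c d * (\<Prod>i<9. \<pi> (z i) * w a b c d i (z i)))"
    using 1 by (rule sum.cong[OF refl])
  also have "\<dots> = (\<Sum>a\<in>S. \<Sum>b\<in>S. \<Sum>c\<in>S. \<Sum>d\<in>S. \<Sum>z\<in>?P. G a b c d * (\<Prod>i<9. \<pi> (z i) * w a b c d i (z i)))"
    by (rule swap5)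
  also have "\<dots> = (\<Sum>a\<in>S. \<Sum>b\<in>S. \<Sum>c\<in>S. \<Sum>d\<in>S. G a b c d * (\<Prod>i<9. \<Sum>s\<in>S. \<pi> s * w a b c d i s))"
    by (simp only: prod_sum_PiE[OF _ S] finite_lessThan sum_distrib_left)
  also have "\<dots> = (\<Sum>a\<in>S. \<Sum>b\<in>S. \<Sum>c\<in>S. \<Sum>d\<in>S. \<pi> a * \<pi> b * \<pi> c * \<pi> d * G a b c d)"
  proof (intro sum.cong refl)
    fix a b c d assume abcd: "a \<in> S" "b \<in> S" "c \<in> S" "d \<in> S"
    have r: "(\<Prod>i\<in>{4..<9}. \<Sum>s\<in>S. \<pi> s * w a b c d i s) = 1"
      by (rule prod.neutral) (auto simp: w_def one)
    show "G a b c d * (\<Prod>i<9. \<Sum>s\<in>S. \<pi> s * w a b c d i s) = \<pi> a * \<pi> b * \<pi> c * \<pi> d * G a b c d"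
      unfolding prod9 r by (simp add: w_def sum_ind1[OF S] abcd mult_ac)
  qed
  finally show ?thesis .
qed

definition ap :: "(real \<times> 'b) list \<Rightarrow> ('b \<Rightarrow> real) \<Rightarrow> real" where
  "ap g F = (\<Sum>p\<leftarrow>g. fst p * F (snd p))"

definition scl :: "real \<Rightarrow> (real \<times> 'b) list \<Rightarrow> (real \<times> 'b) list" where
  "scl s g = map (\<lambda>p. (s * fst p, snd p)) g"

lemma ap_Nil[simp]: "ap [] F = 0" by (simp add: ap_def)
lemma ap_Cons[simp]: "ap (p # g) F = fst p * F (snd p) + ap g F" by (simp add: ap_def)
lemma ap_append[simp]: "ap (g @ h) F = ap g F + ap h F" by (simp add: ap_def)
lemma ap_scl[simp]: "ap (scl s g) F = s * ap g F"
  by (induction g) (auto simp: scl_def algebra_simps)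
lemma set_scl[simp]: "snd ` set (scl s g) = snd ` set g"
  by (force simp: scl_def image_iff)
lemma ap_concat: "ap (concat (map G xs)) F = (\<Sum>k\<leftarrow>xs. ap (G k) F)"
  by (induction xs) auto

lemma ap_lin:
  assumes "finite I"
  shows "ap g (\<lambda>x. \<Sum>i\<in>I. a i * f i x) = (\<Sum>i\<in>I. a i * ap g (f i))"
  by (induction g) (auto simp: sum.distrib sum_distrib_left algebra_simps)

lemma ap_cong:
  assumes "snd ` set g \<subseteq> X" "\<And>x. x \<in> X \<Longrightarrow> F x = G x"
  shows "ap g F = ap g G"
  using assms by (induction g) auto

definition indep :: "'b set \<Rightarrow> nat set \<Rightarrow> (nat \<Rightarrow> 'b \<Rightarrow> real) \<Rightarrow> bool" where
  "indep X I f \<longleftrightarrow> (\<forall>c. (\<forall>x\<in>X. (\<Sum>i\<in>I. c i * f i x) = 0) \<longrightarrow> (\<forall>i\<in>I. c i = 0))"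

lemma indep_subset:
  assumes "indep X I f" "J \<subseteq> I" "finite I"
  shows "indep X J f"
  unfolding indep_def
proof (intro allI impI)
  fix c assume h: "\<forall>x\<in>X. (\<Sum>i\<in>J. c i * f i x) = 0"
  let ?c = "\<lambda>i. if i \<in> J then c i else 0"
  have "\<forall>x\<in>X. (\<Sum>i\<in>I. ?c i * f i x) = 0"
  proof
    fix x assume "x \<in> X"
    have "(\<Sum>i\<in>I. ?c i * f i x) = (\<Sum>i\<in>J. c i * f i x)"
      using assms(2,3) by (intro sum.mono_neutral_cong_right) auto
    then show "(\<Sum>i\<in>I. ?c i * f i x) = 0" using h \<open>x\<in>X\<close> by simp
  qed
  then have "\<forall>i\<in>I. ?c i = 0" using assms(1)[unfolded indep_def, THEN spec[where x="?c"]] by blast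
  then show "\<forall>i\<in>J. c i = 0" using assms(2) by force
qed

lemma dual_exists:
  assumes "finite I" "indep X I f"
  shows "\<exists>g. \<forall>k\<in>I. snd ` set (g k) \<subseteq> X \<and> (\<forall>i\<in>I. ap (g k) (f i) = (if i = k then 1 else 0))"
  using assms
proof (induction I rule: finite_induct)
  case empty then show ?case by simp
next
  case (insert a J)
  have "indep X J f" using indep_subset[OF insert.prems] insert.hyps by auto
  then obtain g where g: "\<And>k. k\<in>J \<Longrightarrow> snd ` set (g k) \<subseteq> X"
     "\<And>k i. k \<in> J \<Longrightarrow> i \<in> J \<Longrightarrow> ap (g k) (f i) = (if i = k then 1 else 0)"
    using insert.IH by blast
  define h where "h x = f a x - (\<Sum>k\<in>J. ap (g k) (f a) * f k x)" for x
  have "\<exists>x\<in>X. h x \<noteq> 0"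
  proof (rule ccontr)
    assume "\<not> ?thesis"
    then have hz: "\<forall>x\<in>X. h x = 0" by blast
    let ?c = "\<lambda>i. if i = a then 1 else - ap (g i) (f a)"
    have "\<forall>x\<in>X. (\<Sum>i\<in>insert a J. ?c i * f i x) = 0"
    proof
      fix x assume x: "x \<in> X"
      have "(\<Sum>i\<in>insert a J. ?c i * f i x) = f a x + (\<Sum>i\<in>J. - ap (g i) (f a) * f i x)"
        using insert.hyps by (auto intro!: sum.cong)
      also have "\<dots> = h x" by (simp add: h_def sum_negf)
      finally show "(\<Sum>i\<in>insert a J. ?c i * f i x) = 0" using hz x by simp
    qed
    then have "\<forall>i\<in>insert a J. ?c i = 0"
      using insert.prems[unfolded indep_def, THEN spec[where x="?c"]] by blast
    then show False by simp
  qed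
  then obtain x0 where x0: "x0 \<in> X" "h x0 \<noteq> 0" by blast
  define ga where "ga = scl (1 / h x0) ((1, x0) # concat (map (\<lambda>k. scl (- f k x0) (g k)) (sorted_list_of_set J)))"
  have apga: "ap ga F = (F x0 - (\<Sum>k\<in>J. f k x0 * ap (g k) F)) / h x0" for F
    using insert.hyps by (simp add: ga_def ap_concat sum_list_distinct_conv_sum_set sum_negf)
  have ga_J: "ap ga (f i) = 0" if "i \<in> J" for i
  proof -
    have "(\<Sum>k\<in>J. f k x0 * ap (g k) (f i)) = f i x0"
    proof -
      have "(\<Sum>k\<in>J. f k x0 * ap (g k) (f i)) = (\<Sum>k\<in>J. if k = i then f k x0 else 0)"
        using g(2) that by (intro sum.cong) auto
      then show ?thesis using that insert.hyps by simp
    qed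
    then show ?thesis by (simp add: apga)
  qed
  have ga_a: "ap ga (f a) = 1"
    using x0 by (simp add: apga h_def mult.commute)
  have ga_X: "snd ` set ga \<subseteq> X"
    using x0 g(1) insert.hyps by (fastforce simp: ga_def scl_def)
  define g' where "g' k = (if k = a then ga else g k @ scl (- ap (g k) (f a)) ga)" for k
  show ?case
  proof (intro exI[of _ g'] ballI conjI)
    fix k assume k: "k \<in> insert a J"
    show "snd ` set (g' k) \<subseteq> X"
    proof (cases "k = a")
      case True then show ?thesis using ga_X by (simp add: g'_def)
    next
      case False then show ?thesis using g(1)[of k] k ga_X by (simp add: g'_def image_Un)
    qed
    fix i assume i: "i \<in> insert a J"
    show "ap (g' k) (f i) = (if i = k then 1 else 0)"
    proof (cases "k = a")
      case True
      then show ?thesis using i ga_J ga_a by (cases "i = a") (auto simp: g'_def)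
    next
      case False
      then have kJ: "k \<in> J" using k by simp
      have e: "ap (g' k) (f i) = ap (g k) (f i) - ap (g k) (f a) * ap ga (f i)"
        using False by (simp add: g'_def)
      show ?thesis
      proof (cases "i = a")
        case True
        then show ?thesis using e ga_a kJ insert.hyps(2) by auto
      next
        case False
        then have iJ: "i \<in> J" using i by simp
        show ?thesis using e ga_J[OF iJ] g(2)[OF kJ iJ] by simp
      qed
    qed
  qed
qed


lemma contract2:
  assumes S: "finite S" and u: "snd ` set u \<subseteq> X" and v: "snd ` set v \<subseteq> X"
    and E: "\<forall>B\<in>X. \<forall>C\<in>X. (\<Sum>i\<in>S. a i * p i B * p i C) = (\<Sum>j\<in>S. b j * q j B * q j C)"
  shows "(\<Sum>i\<in>S. a i * ap u (p i) * ap v (p i)) = (\<Sum>j\<in>S. b j * ap u (q j) * ap v (q j))"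
proof -
  have 1: "(\<Sum>i\<in>S. (a i * p i B) * ap v (p i)) = (\<Sum>j\<in>S. (b j * q j B) * ap v (q j))" if B: "B \<in> X" for B
  proof -
    have "(\<Sum>i\<in>S. (a i * p i B) * ap v (p i)) = ap v (\<lambda>C. \<Sum>i\<in>S. (a i * p i B) * p i C)"
      by (simp add: ap_lin[OF S])
    also have "\<dots> = ap v (\<lambda>C. \<Sum>j\<in>S. (b j * q j B) * q j C)"
      using E B by (intro ap_cong[OF v]) auto
    also have "\<dots> = (\<Sum>j\<in>S. (b j * q j B) * ap v (q j))"
      by (simp add: ap_lin[OF S])
    finally show ?thesis .
  qed
  have "(\<Sum>i\<in>S. a i * ap u (p i) * ap v (p i)) = ap u (\<lambda>B. \<Sum>i\<in>S. (a i * ap v (p i)) * p i B)"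
    by (subst ap_lin[OF S]) (simp add: mult_ac)
  also have "\<dots> = ap u (\<lambda>B. \<Sum>j\<in>S. (b j * ap v (q j)) * q j B)"
    using 1 by (intro ap_cong[OF u]) (auto simp: mult_ac)
  also have "\<dots> = (\<Sum>j\<in>S. b j * ap u (q j) * ap v (q j))"
    by (subst ap_lin[OF S]) (simp add: mult_ac)
  finally show ?thesis .
qed

lemma tensor_unique:
  fixes f h :: "nat \<Rightarrow> 'b \<Rightarrow> real" and \<pi> \<pi>' :: "nat \<Rightarrow> real"
  assumes S: "finite S"
    and fi: "indep X S f" and hi: "indep X S h"
    and pos: "\<forall>i\<in>S. \<pi> i > 0" "\<forall>i\<in>S. \<pi>' i > 0"
    and U: "U \<in> X" "\<forall>i\<in>S. f i U = 1" "\<forall>i\<in>S. h i U = 1"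
    and T: "\<forall>A\<in>X. \<forall>B\<in>X. \<forall>C\<in>X. (\<Sum>i\<in>S. \<pi> i * f i A * f i B * f i C) = (\<Sum>j\<in>S. \<pi>' j * h j A * h j B * h j C)"
  shows "\<exists>\<sigma>. \<sigma> ` S \<subseteq> S \<and> inj_on \<sigma> S \<and> (\<forall>j\<in>S. \<pi>' j = \<pi> (\<sigma> j) \<and> (\<forall>A\<in>X. h j A = f (\<sigma> j) A))"
proof -
  obtain g where g: "\<And>k. k \<in> S \<Longrightarrow> snd ` set (g k) \<subseteq> X"
    "\<And>k i. k \<in> S \<Longrightarrow> i \<in> S \<Longrightarrow> ap (g k) (f i) = (if i = k then 1 else 0)"
    using dual_exists[OF S fi] by blast
  obtain g' where g': "\<And>k. k \<in> S \<Longrightarrow> snd ` set (g' k) \<subseteq> X"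
    "\<And>k i. k \<in> S \<Longrightarrow> i \<in> S \<Longrightarrow> ap (g' k) (h i) = (if i = k then 1 else 0)"
    using dual_exists[OF S hi] by blast
  have C: "(\<Sum>i\<in>S. (\<pi> i * f i A) * ap u (f i) * ap v (f i)) = (\<Sum>j\<in>S. (\<pi>' j * h j A) * ap u (h j) * ap v (h j))"
    if "A \<in> X" "snd ` set u \<subseteq> X" "snd ` set v \<subseteq> X" for A u v
    apply (rule contract2[OF S that(2,3)])
    using T that(1) by (simp add: mult_ac)
  define c where "c i j = \<pi> i * (ap (g' j) (f i))^2 / \<pi>' j" for i j
  have hexp: "h j A = (\<Sum>i\<in>S. c i j * f i A)" if j: "j \<in> S" and A: "A \<in> X" for j A
  proof -
    have "(\<Sum>j'\<in>S. (\<pi>' j' * h j' A) * ap (g' j) (h j') * ap (g' j) (h j')) = (\<Sum>j'\<in>S. if j' = j then \<pi>' j' * h j' A else 0)"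
      using g'(2) j by (intro sum.cong) auto
    also have "\<dots> = \<pi>' j * h j A" using S j by simp
    finally have "\<pi>' j * h j A = (\<Sum>i\<in>S. (\<pi> i * f i A) * ap (g' j) (f i) * ap (g' j) (f i))"
      using C[OF A g'(1)[OF j] g'(1)[OF j]] by simp
    moreover have p: "\<pi>' j > 0" using pos(2) j by simp
    ultimately have "h j A = (\<Sum>i\<in>S. (\<pi> i * f i A) * ap (g' j) (f i) * ap (g' j) (f i)) / \<pi>' j"
      by (metis less_irrefl nonzero_mult_div_cancel_left)
    also have "\<dots> = (\<Sum>i\<in>S. c i j * f i A)"
      by (simp add: c_def sum_divide_distrib power2_eq_square mult_ac)
    finally show ?thesis .
  qed
  have apc: "ap (g k) (h j) = c k j" if "k \<in> S" "j \<in> S" for k j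
  proof -
    have "ap (g k) (h j) = ap (g k) (\<lambda>A. \<Sum>i\<in>S. c i j * f i A)"
      using hexp that by (intro ap_cong[OF g(1)]) auto
    also have "\<dots> = (\<Sum>i\<in>S. c i j * ap (g k) (f i))" by (simp add: ap_lin[OF S])
    also have "\<dots> = (\<Sum>i\<in>S. if i = k then c i j else 0)" using g(2) that by (intro sum.cong) auto
    also have "\<dots> = c k j" using S that by simp
    finally show ?thesis .
  qed
  have offd: "c k j * c l j = 0" if "k \<in> S" "l \<in> S" "k \<noteq> l" "j \<in> S" for k l j
  proof -
    have "\<forall>A\<in>X. (\<Sum>j\<in>S. (\<pi>' j * c k j * c l j) * h j A) = 0"
    proof
      fix A assume A: "A \<in> X"
      have "(\<Sum>j\<in>S. (\<pi>' j * c k j * c l j) * h j A) = (\<Sum>j\<in>S. (\<pi>' j * h j A) * ap (g k) (h j) * ap (g l) (h j))"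
        using apc that by (intro sum.cong) (auto simp: mult_ac)
      also have "\<dots> = (\<Sum>i\<in>S. (\<pi> i * f i A) * ap (g k) (f i) * ap (g l) (f i))"
        using C[OF A g(1) g(1)] that by simp
      also have "\<dots> = 0" using g(2) that by (intro sum.neutral) auto
      finally show "(\<Sum>j\<in>S. (\<pi>' j * c k j * c l j) * h j A) = 0" .
    qed
    then have "\<pi>' j * c k j * c l j = 0"
      using hi[unfolded indep_def, THEN spec[where x="\<lambda>j. \<pi>' j * c k j * c l j"]] that by blast
    moreover have "\<pi>' j > 0" using pos(2) that by simp
    ultimately show ?thesis by simp
  qed
  define \<sigma> where "\<sigma> j = (SOME k. k \<in> S \<and> c k j \<noteq> 0)" for j
  have \<sigma>: "\<sigma> j \<in> S \<and> c (\<sigma> j) j \<noteq> 0" if j: "j \<in> S" for j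
  proof -
    have "\<exists>k. k \<in> S \<and> c k j \<noteq> 0"
    proof (rule ccontr)
      assume "\<not> ?thesis"
      then have "h j U = 0" using hexp[OF j U(1)] by simp
      then show False using U j by simp
    qed
    then show ?thesis unfolding \<sigma>_def by (rule someI_ex)
  qed
  have hf: "h j A = f (\<sigma> j) A" if j: "j \<in> S" and A: "A \<in> X" for j A
  proof -
    have z: "c i j = 0" if "i \<in> S" "i \<noteq> \<sigma> j" for i
      using offd[OF that(1) _ that(2) j] \<sigma>[OF j] by auto
    have e: "h j B = c (\<sigma> j) j * f (\<sigma> j) B" if "B \<in> X" for B
    proof -
      have "h j B = (\<Sum>i\<in>S. if i = \<sigma> j then c i j * f i B else 0)"
        using hexp[OF j that] z by (auto intro!: sum.cong)
      then show ?thesis using S \<sigma>[OF j] by simp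
    qed
    have "c (\<sigma> j) j = 1" using e[OF U(1)] U j \<sigma>[OF j] by simp
    then show ?thesis using e[OF A] by simp
  qed
  have inj: "inj_on \<sigma> S"
  proof (rule inj_onI, rule ccontr)
    fix j j' assume jj: "j \<in> S" "j' \<in> S" "\<sigma> j = \<sigma> j'" "j \<noteq> j'"
    let ?c = "\<lambda>i. if i = j then 1 else if i = j' then -1 else (0::real)"
    have "\<forall>A\<in>X. (\<Sum>i\<in>S. ?c i * h i A) = 0"
    proof
      fix A assume A: "A \<in> X"
      have "(\<Sum>i\<in>S. ?c i * h i A) = (\<Sum>i\<in>S. (if i = j then h j A else 0) + (if i = j' then - h j' A else 0))"
        using jj by (intro sum.cong) auto
      also have "\<dots> = h j A - h j' A" using S jj by (simp add: sum.distrib)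
      also have "\<dots> = 0" using hf[OF jj(1) A] hf[OF jj(2) A] jj(3) by simp
      finally show "(\<Sum>i\<in>S. ?c i * h i A) = 0" .
    qed
    then have "?c j = 0" using hi[unfolded indep_def, THEN spec[where x="?c"]] jj by blast
    then show False by simp
  qed
  have pi: "\<pi>' j = \<pi> (\<sigma> j)" if j: "j \<in> S" for j
  proof -
    let ?k = "\<sigma> j"
    have k: "?k \<in> S" using \<sigma>[OF j] by simp
    have apk: "ap (g ?k) (h j') = (if j' = j then 1 else 0)" if "j' \<in> S" for j'
    proof -
      have "ap (g ?k) (h j') = ap (g ?k) (f (\<sigma> j'))"
        using hf that by (intro ap_cong[OF g(1)[OF k]]) auto
      also have "\<dots> = (if \<sigma> j' = ?k then 1 else 0)" using g(2)[OF k] \<sigma>[OF that] by simp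
      also have "\<dots> = (if j' = j then 1 else 0)" using inj that j by (auto dest: inj_onD)
      finally show ?thesis .
    qed
    have "(\<Sum>i\<in>S. (\<pi> i * f i U) * ap (g ?k) (f i) * ap (g ?k) (f i)) = (\<Sum>i\<in>S. if i = ?k then \<pi> i * f i U else 0)"
      using g(2)[OF k] by (intro sum.cong) auto
    also have "\<dots> = \<pi> ?k" using S k U by simp
    finally have 1: "(\<Sum>i\<in>S. (\<pi> i * f i U) * ap (g ?k) (f i) * ap (g ?k) (f i)) = \<pi> ?k" .
    have "(\<Sum>j'\<in>S. (\<pi>' j' * h j' U) * ap (g ?k) (h j') * ap (g ?k) (h j')) = (\<Sum>j'\<in>S. if j' = j then \<pi>' j' * h j' U else 0)"
      using apk by (intro sum.cong) auto
    also have "\<dots> = \<pi>' j" using S j U by simp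
    finally show ?thesis using 1 C[OF U(1) g(1)[OF k] g(1)[OF k]] by simp
  qed
  have "\<sigma> ` S \<subseteq> S" using \<sigma> by blast
  moreover have "\<forall>j\<in>S. \<pi>' j = \<pi> (\<sigma> j) \<and> (\<forall>A\<in>X. h j A = f (\<sigma> j) A)"
    using pi hf by simp
  ultimately show ?thesis using inj
    apply (intro exI[of _ \<sigma>] conjI)
      apply assumption+
    done
qed

definition mm :: "nat \<Rightarrow> (nat \<Rightarrow> real) \<Rightarrow> (nat \<Rightarrow> nat \<Rightarrow> 'a::euclidean_space measure) \<Rightarrow> nat \<Rightarrow> 'a set \<Rightarrow> real" where
  "mm Q \<pi> \<mu> q A = (\<Sum>b\<in>{1..Q}. \<pi> b * measure (\<mu> q b) A)"

lemma sym_sum: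
  fixes w F :: "nat \<Rightarrow> nat \<Rightarrow> real"
  assumes sym: "\<And>q l. q \<in> {1..Q} \<Longrightarrow> l \<in> {1..Q} \<Longrightarrow> F q l = F l q"
  shows "(\<Sum>q\<in>{1..Q}. \<Sum>l\<in>{1..Q}. w q l * F q l) =
    (\<Sum>(q,l)\<in>{(q,l). 1\<le>q \<and> q\<le>l \<and> l\<le>Q}. (if q = l then w q l else w q l + w l q) * F q l)"
proof -
  let ?P = "{(q,l). 1\<le>q \<and> q\<le>l \<and> l\<le>(Q::nat)}"
  let ?R = "{(q,l). 1\<le>l \<and> l<q \<and> q\<le>(Q::nat)}"
  let ?L = "{(q,l). 1\<le>q \<and> q<l \<and> l\<le>(Q::nat)}"
  have finP: "finite ?P" by (rule finite_subset[of _ "{1..Q}\<times>{1..Q}"]) auto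
  have finR: "finite ?R" by (rule finite_subset[of _ "{1..Q}\<times>{1..Q}"]) auto
  have finL: "finite ?L" by (rule finite_subset[of _ "{1..Q}\<times>{1..Q}"]) auto
  have sq: "{1..Q}\<times>{1..Q} = ?P \<union> ?R" by auto
  have "(\<Sum>q\<in>{1..Q}. \<Sum>l\<in>{1..Q}. w q l * F q l) = (\<Sum>(q,l)\<in>{1..Q}\<times>{1..Q}. w q l * F q l)"
    by (simp add: sum.cartesian_product)
  also have "\<dots> = (\<Sum>(q,l)\<in>?P. w q l * F q l) + (\<Sum>(q,l)\<in>?R. w q l * F q l)"
    unfolding sq by (rule sum.union_disjoint[OF finP finR]) auto
  also have "(\<Sum>(q,l)\<in>?R. w q l * F q l) = (\<Sum>(q,l)\<in>?L. w l q * F q l)"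
  proof -
    have "?R = prod.swap ` ?L" by (auto simp: image_iff)
    then have "(\<Sum>(q,l)\<in>?R. w q l * F q l) = (\<Sum>x\<in>?L. (\<lambda>(q,l). w q l * F q l) (prod.swap x))"
      by (simp add: sum.reindex)
    also have "\<dots> = (\<Sum>(q,l)\<in>?L. w l q * F q l)"
      by (rule sum.cong) (auto simp: sym)
    finally show ?thesis .
  qed
  also have "(\<Sum>(q,l)\<in>?L. w l q * F q l) = (\<Sum>(q,l)\<in>?P. (if q = l then 0 else w l q) * F q l)"
    by (rule sum.mono_neutral_cong_left[OF finP]) (auto split: if_splits)
  also have "(\<Sum>(q,l)\<in>?P. w q l * F q l) + (\<Sum>(q,l)\<in>?P. (if q = l then 0 else w l q) * F q l)
     = (\<Sum>(q,l)\<in>?P. (if q = l then w q l else w q l + w l q) * F q l)"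
    by (simp add: sum.distrib[symmetric] split_def algebra_simps) (rule sum.cong, auto simp: algebra_simps)
  finally show ?thesis .
qed

lemma indep_mm:
  assumes P: "np_wrgmm_param Q \<pi> \<mu>" and L: "measures_lin_indep Q \<mu>"
  shows "indep (sets borel) {1..Q} (mm Q \<pi> \<mu>)"
  unfolding indep_def
proof (intro allI impI)
  fix c assume h: "\<forall>A\<in>sets borel. (\<Sum>i\<in>{1..Q}. c i * mm Q \<pi> \<mu> i A) = 0"
  define d where "d q l = (if q = l then c q * \<pi> l else c q * \<pi> l + c l * \<pi> q)" for q l
  have "\<forall>A\<in>sets borel. (\<Sum>(q, l)\<in>{(q, l). 1 \<le> q \<and> q \<le> l \<and> l \<le> Q}. d q l * measure (\<mu> q l) A) = 0"
  proof
    fix A :: "'a set" assume A: "A \<in> sets borel"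
    have "(\<Sum>(q, l)\<in>{(q, l). 1 \<le> q \<and> q \<le> l \<and> l \<le> Q}. d q l * measure (\<mu> q l) A) =
       (\<Sum>q\<in>{1..Q}. \<Sum>l\<in>{1..Q}. (c q * \<pi> l) * measure (\<mu> q l) A)"
      unfolding d_def
      by (rule sym_sum[where F="\<lambda>q l. measure (\<mu> q l) A" and w="\<lambda>q l. c q * \<pi> l", symmetric])
        (use P in \<open>auto simp: np_wrgmm_param_def\<close>)
    also have "\<dots> = (\<Sum>i\<in>{1..Q}. c i * mm Q \<pi> \<mu> i A)"
      by (simp add: mm_def sum_distrib_left mult_ac)
    finally show "(\<Sum>(q, l)\<in>{(q, l). 1 \<le> q \<and> q \<le> l \<and> l \<le> Q}. d q l * measure (\<mu> q l) A) = 0"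
      using h A by simp
  qed
  then have d0: "\<forall>q l. 1 \<le> q \<and> q \<le> l \<and> l \<le> Q \<longrightarrow> d q l = 0"
    using L[unfolded measures_lin_indep_def, THEN spec[where x=d]] by blast
  show "\<forall>i\<in>{1..Q}. c i = 0"
  proof
    fix i assume i: "i \<in> {1..Q}"
    then have "d i i = 0" using d0 by simp
    then have "c i * \<pi> i = 0" by (simp add: d_def)
    moreover have "\<pi> i > 0" using P i by (simp add: np_wrgmm_param_def)
    ultimately show "c i = 0" by simp
  qed
qed

lemma mm_UNIV:
  assumes P: "np_wrgmm_param Q \<pi> \<mu>" and q: "q \<in> {1..Q}"
  shows "mm Q \<pi> \<mu> q UNIV = 1"
proof -
  have "mm Q \<pi> \<mu> q UNIV = (\<Sum>b\<in>{1..Q}. \<pi> b)"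
    unfolding mm_def using P q by (intro sum.cong) (auto simp: np_wrgmm_param_def edge_law_facts(4))
  then show ?thesis using P by (simp add: np_wrgmm_param_def)
qed

lemma star_identity:
  fixes \<mu> :: "nat \<Rightarrow> nat \<Rightarrow> 'a::euclidean_space measure"
  assumes P: "np_wrgmm_param Q \<pi> \<mu>" and ABC: "A \<in> sets borel" "B \<in> sets borel" "C \<in> sets borel"
  shows "joint_law Q \<pi> \<mu> 9 (prod_emb (edges 9) (\<lambda>_. borel) {(0,1),(0,2),(0,3)}
      (Pi\<^sub>E {(0,1),(0,2),(0,3)} (\<lambda>e. if e = (0,1) then A else if e = (0,2) then B else C))) =
    (\<Sum>q\<in>{1..Q}. \<pi> q * mm Q \<pi> \<mu> q A * mm Q \<pi> \<mu> q B * mm Q \<pi> \<mu> q C)"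
proof -
  have sum1: "(\<Sum>s\<in>{1..Q}. \<pi> s) = 1" using P by (simp add: np_wrgmm_param_def)
  have "joint_law Q \<pi> \<mu> 9 (prod_emb (edges 9) (\<lambda>_. borel) {(0,1),(0,2),(0,3)}
      (Pi\<^sub>E {(0,1),(0,2),(0,3)} (\<lambda>e. if e = (0,1) then A else if e = (0,2) then B else C))) =
     (\<Sum>z\<in>{..<9::nat} \<rightarrow>\<^sub>E {1..Q}. (\<Prod>i<(9::nat). \<pi> (z i)) *
        (\<Prod>e\<in>{(0::nat,1::nat),(0,2),(0,3)}. measure (\<mu> (z (fst e)) (z (snd e)))
          ((\<lambda>e. if e = (0,1) then A else if e = (0,2) then B else C) e)))"
    by (rule joint_law_cyl[OF P]) (use ABC in \<open>auto simp: edges_def\<close>)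
  also have "\<dots> = (\<Sum>z\<in>{..<9::nat} \<rightarrow>\<^sub>E {1..Q}. (\<Prod>i<(9::nat). \<pi> (z i)) *
      (\<lambda>a b c d. measure (\<mu> a b) A * measure (\<mu> a c) B * measure (\<mu> a d) C) (z 0) (z 1) (z 2) (z 3))"
    by (simp add: mult_ac)
  also have "\<dots> = (\<Sum>a\<in>{1..Q}. \<Sum>b\<in>{1..Q}. \<Sum>c\<in>{1..Q}. \<Sum>d\<in>{1..Q}. \<pi> a * \<pi> b * \<pi> c * \<pi> d *
      (measure (\<mu> a b) A * measure (\<mu> a c) B * measure (\<mu> a d) C))"
    by (rule sum_out4[OF _ sum1]) simp
  also have "\<dots> = (\<Sum>q\<in>{1..Q}. \<pi> q * mm Q \<pi> \<mu> q A * mm Q \<pi> \<mu> q B * mm Q \<pi> \<mu> q C)"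
    by (simp add: mm_def sum_distrib_left sum_distrib_right mult_ac)
  finally show ?thesis .
qed

lemma path_identity:
  fixes \<mu> :: "nat \<Rightarrow> nat \<Rightarrow> 'a::euclidean_space measure"
  assumes P: "np_wrgmm_param Q \<pi> \<mu>" and ABC: "A \<in> sets borel" "B \<in> sets borel" "C \<in> sets borel"
  shows "joint_law Q \<pi> \<mu> 9 (prod_emb (edges 9) (\<lambda>_. borel) {(0,1),(0,2),(1,3)}
      (Pi\<^sub>E {(0,1),(0,2),(1,3)} (\<lambda>e. if e = (0,1) then A else if e = (0,2) then B else C))) =
    (\<Sum>q\<in>{1..Q}. \<Sum>l\<in>{1..Q}. (\<pi> q * \<pi> l * measure (\<mu> q l) A) * mm Q \<pi> \<mu> q B * mm Q \<pi> \<mu> l C)"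
proof -
  have sum1: "(\<Sum>s\<in>{1..Q}. \<pi> s) = 1" using P by (simp add: np_wrgmm_param_def)
  have "joint_law Q \<pi> \<mu> 9 (prod_emb (edges 9) (\<lambda>_. borel) {(0,1),(0,2),(1,3)}
      (Pi\<^sub>E {(0,1),(0,2),(1,3)} (\<lambda>e. if e = (0,1) then A else if e = (0,2) then B else C))) =
     (\<Sum>z\<in>{..<9::nat} \<rightarrow>\<^sub>E {1..Q}. (\<Prod>i<(9::nat). \<pi> (z i)) *
        (\<Prod>e\<in>{(0::nat,1::nat),(0,2),(1,3)}. measure (\<mu> (z (fst e)) (z (snd e)))
          ((\<lambda>e. if e = (0,1) then A else if e = (0,2) then B else C) e)))"
    by (rule joint_law_cyl[OF P]) (use ABC in \<open>auto simp: edges_def\<close>)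
  also have "\<dots> = (\<Sum>z\<in>{..<9::nat} \<rightarrow>\<^sub>E {1..Q}. (\<Prod>i<(9::nat). \<pi> (z i)) *
      (\<lambda>a b c d. measure (\<mu> a b) A * measure (\<mu> a c) B * measure (\<mu> b d) C) (z 0) (z 1) (z 2) (z 3))"
    by (simp add: mult_ac)
  also have "\<dots> = (\<Sum>a\<in>{1..Q}. \<Sum>b\<in>{1..Q}. \<Sum>c\<in>{1..Q}. \<Sum>d\<in>{1..Q}. \<pi> a * \<pi> b * \<pi> c * \<pi> d *
      (measure (\<mu> a b) A * measure (\<mu> a c) B * measure (\<mu> b d) C))"
    by (rule sum_out4[OF _ sum1]) simp
  also have "\<dots> = (\<Sum>q\<in>{1..Q}. \<Sum>l\<in>{1..Q}. (\<pi> q * \<pi> l * measure (\<mu> q l) A) * mm Q \<pi> \<mu> q B * mm Q \<pi> \<mu> l C)"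
    by (simp add: mm_def sum_distrib_left sum_distrib_right mult_ac)
  finally show ?thesis .
qed

lemma ap_sum: "ap g (\<lambda>x. \<Sum>i\<in>I. F i x) = (\<Sum>i\<in>I. ap g (F i))"
  by (induction g) (auto simp: sum.distrib sum_distrib_left)

lemma ap_cmult: "ap g (\<lambda>x. c * F x) = c * ap g F"
  by (induction g) (auto simp: algebra_simps)

lemma ap_cmult2: "ap g (\<lambda>x. F x * c) = ap g F * c"
  by (induction g) (auto simp: algebra_simps)

lemma contract_double:
  assumes u: "snd ` set u \<subseteq> X" and v: "snd ` set v \<subseteq> X"
    and E: "\<forall>B\<in>X. \<forall>C\<in>X. (\<Sum>a\<in>S. \<Sum>b\<in>S. w a b * p a B * p b C) = (\<Sum>a\<in>S. \<Sum>b\<in>S. w' a b * q a B * q b C)"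
  shows "(\<Sum>a\<in>S. \<Sum>b\<in>S. w a b * ap u (p a) * ap v (p b)) = (\<Sum>a\<in>S. \<Sum>b\<in>S. w' a b * ap u (q a) * ap v (q b))"
proof -
  have 1: "(\<Sum>a\<in>S. \<Sum>b\<in>S. (w a b * ap v (p b)) * p a B) = (\<Sum>a\<in>S. \<Sum>b\<in>S. (w' a b * ap v (q b)) * q a B)"
    if B: "B \<in> X" for B
  proof -
    have "(\<Sum>a\<in>S. \<Sum>b\<in>S. (w a b * ap v (p b)) * p a B) = ap v (\<lambda>C. \<Sum>a\<in>S. \<Sum>b\<in>S. (w a b * p a B) * p b C)"
      by (simp add: ap_sum ap_cmult ap_cmult2 mult_ac)
    also have "\<dots> = ap v (\<lambda>C. \<Sum>a\<in>S. \<Sum>b\<in>S. (w' a b * q a B) * q b C)"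
      using E B by (intro ap_cong[OF v]) (simp add: mult_ac)
    also have "\<dots> = (\<Sum>a\<in>S. \<Sum>b\<in>S. (w' a b * ap v (q b)) * q a B)"
      by (simp add: ap_sum ap_cmult ap_cmult2 mult_ac)
    finally show ?thesis .
  qed
  have "(\<Sum>a\<in>S. \<Sum>b\<in>S. w a b * ap u (p a) * ap v (p b)) = ap u (\<lambda>B. \<Sum>a\<in>S. \<Sum>b\<in>S. (w a b * ap v (p b)) * p a B)"
    by (simp add: ap_sum ap_cmult ap_cmult2 mult_ac)
  also have "\<dots> = ap u (\<lambda>B. \<Sum>a\<in>S. \<Sum>b\<in>S. (w' a b * ap v (q b)) * q a B)"
    using 1 by (intro ap_cong[OF u]) simp
  also have "\<dots> = (\<Sum>a\<in>S. \<Sum>b\<in>S. w' a b * ap u (q a) * ap v (q b))"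
    by (simp add: ap_sum ap_cmult ap_cmult2 mult_ac)
  finally show ?thesis .
qed

lemma double_delta:
  fixes w :: "nat \<Rightarrow> nat \<Rightarrow> real"
  assumes S: "finite S" and kl: "k \<in> S" "l \<in> S"
    and d1: "\<And>a. a \<in> S \<Longrightarrow> d1 a = (if a = k then 1 else 0)"
    and d2: "\<And>b. b \<in> S \<Longrightarrow> d2 b = (if b = l then 1 else 0)"
  shows "(\<Sum>a\<in>S. \<Sum>b\<in>S. w a b * d1 a * d2 b) = w k l"
proof -
  have "(\<Sum>a\<in>S. \<Sum>b\<in>S. w a b * d1 a * d2 b) = (\<Sum>a\<in>S. if a = k then (\<Sum>b\<in>S. if b = l then w a b else 0) else 0)"
    using d1 d2 by (intro sum.cong refl) (auto intro!: sum.cong)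
  also have "\<dots> = w k l" using S kl by simp
  finally show ?thesis .
qed

theorem theorem8:
  fixes Q :: nat and \<pi> \<pi>' :: "nat \<Rightarrow> real"
    and \<mu> \<mu>' :: "nat \<Rightarrow> nat \<Rightarrow> 'a::euclidean_space measure"
  assumes "Q \<ge> 2"
    and "np_wrgmm_param Q \<pi> \<mu>" and "measures_lin_indep Q \<mu>"
    and "np_wrgmm_param Q \<pi>' \<mu>'" and "measures_lin_indep Q \<mu>'"
    and "\<forall>A\<in>sets (PiM (edges 9) (\<lambda>_. (borel :: 'a measure))).
           joint_law Q \<pi> \<mu> 9 A = joint_law Q \<pi>' \<mu>' 9 A"
  shows "\<exists>\<sigma>. \<sigma> permutes {1..Q} \<and> (\<forall>q\<in>{1..Q}. \<pi>' q = \<pi> (\<sigma> q)) \<and>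
           (\<forall>q\<in>{1..Q}. \<forall>l\<in>{1..Q}. \<mu>' q l = \<mu> (\<sigma> q) (\<sigma> l))"
proof -
  let ?S = "{1..Q::nat}"
  let ?X = "sets (borel :: 'a measure)"
  have S: "finite ?S" by simp
  have P1: "np_wrgmm_param Q \<pi> \<mu>" and P2: "np_wrgmm_param Q \<pi>' \<mu>'" using assms by simp_all
  have pos1: "\<forall>i\<in>?S. \<pi> i > 0" using P1 by (simp add: np_wrgmm_param_def)
  have pos2: "\<forall>i\<in>?S. \<pi>' i > 0" using P2 by (simp add: np_wrgmm_param_def)
  have ind1: "indep ?X ?S (mm Q \<pi> \<mu>)" by (rule indep_mm[OF assms(2,3)])
  have ind2: "indep ?X ?S (mm Q \<pi>' \<mu>')" by (rule indep_mm[OF assms(4,5)])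
  have U1: "\<forall>i\<in>?S. mm Q \<pi> \<mu> i UNIV = 1" using mm_UNIV[OF P1] by blast
  have U2: "\<forall>i\<in>?S. mm Q \<pi>' \<mu>' i UNIV = 1" using mm_UNIV[OF P2] by blast
  have UX: "UNIV \<in> ?X" by simp
  have EQ: "joint_law Q \<pi> \<mu> 9 (prod_emb (edges 9) (\<lambda>_. borel) J (Pi\<^sub>E J Y)) =
      joint_law Q \<pi>' \<mu>' 9 (prod_emb (edges 9) (\<lambda>_. borel) J (Pi\<^sub>E J Y))"
    if "J \<subseteq> edges 9" "finite J" "\<And>e. e \<in> J \<Longrightarrow> Y e \<in> ?X" for J Y
  proof -
    have "prod_emb (edges 9) (\<lambda>_. borel) J (Pi\<^sub>E J Y) \<in> sets (PiM (edges 9) (\<lambda>_. (borel :: 'a measure)))"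
      using sets_PiM_I[of J "edges 9" Y "\<lambda>_. borel"] that by blast
    then show ?thesis using assms(6) by blast
  qed
  have Jstar: "{(0::nat,1::nat),(0,2),(0,3)} \<subseteq> edges 9" by (auto simp: edges_def)
  have Jpath: "{(0::nat,1::nat),(0,2),(1,3)} \<subseteq> edges 9" by (auto simp: edges_def)
  have T: "\<forall>A\<in>?X. \<forall>B\<in>?X. \<forall>C\<in>?X. (\<Sum>i\<in>?S. \<pi> i * mm Q \<pi> \<mu> i A * mm Q \<pi> \<mu> i B * mm Q \<pi> \<mu> i C)
      = (\<Sum>j\<in>?S. \<pi>' j * mm Q \<pi>' \<mu>' j A * mm Q \<pi>' \<mu>' j B * mm Q \<pi>' \<mu>' j C)"
  proof (intro ballI)
    fix A B C assume ABC: "A \<in> ?X" "B \<in> ?X" "C \<in> ?X"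
    have "joint_law Q \<pi> \<mu> 9 (prod_emb (edges 9) (\<lambda>_. borel) {(0,1),(0,2),(0,3)}
      (Pi\<^sub>E {(0,1),(0,2),(0,3)} (\<lambda>e. if e = (0,1) then A else if e = (0,2) then B else C))) =
      joint_law Q \<pi>' \<mu>' 9 (prod_emb (edges 9) (\<lambda>_. borel) {(0,1),(0,2),(0,3)}
      (Pi\<^sub>E {(0,1),(0,2),(0,3)} (\<lambda>e. if e = (0,1) then A else if e = (0,2) then B else C)))"
      by (rule EQ[OF Jstar]) (use ABC in auto)
    then show "(\<Sum>i\<in>?S. \<pi> i * mm Q \<pi> \<mu> i A * mm Q \<pi> \<mu> i B * mm Q \<pi> \<mu> i C)
      = (\<Sum>j\<in>?S. \<pi>' j * mm Q \<pi>' \<mu>' j A * mm Q \<pi>' \<mu>' j B * mm Q \<pi>' \<mu>' j C)"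
      by (simp only: star_identity[OF P1 ABC] star_identity[OF P2 ABC])
  qed
  have K: "\<forall>B\<in>?X. \<forall>C\<in>?X. (\<Sum>q\<in>?S. \<Sum>l\<in>?S. (\<pi> q * \<pi> l * measure (\<mu> q l) A) * mm Q \<pi> \<mu> q B * mm Q \<pi> \<mu> l C)
      = (\<Sum>q\<in>?S. \<Sum>l\<in>?S. (\<pi>' q * \<pi>' l * measure (\<mu>' q l) A) * mm Q \<pi>' \<mu>' q B * mm Q \<pi>' \<mu>' l C)"
    if A: "A \<in> ?X" for A
  proof (intro ballI)
    fix B C assume BC: "B \<in> ?X" "C \<in> ?X"
    have "joint_law Q \<pi> \<mu> 9 (prod_emb (edges 9) (\<lambda>_. borel) {(0,1),(0,2),(1,3)}
      (Pi\<^sub>E {(0,1),(0,2),(1,3)} (\<lambda>e. if e = (0,1) then A else if e = (0,2) then B else C))) =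
      joint_law Q \<pi>' \<mu>' 9 (prod_emb (edges 9) (\<lambda>_. borel) {(0,1),(0,2),(1,3)}
      (Pi\<^sub>E {(0,1),(0,2),(1,3)} (\<lambda>e. if e = (0,1) then A else if e = (0,2) then B else C)))"
      by (rule EQ[OF Jpath]) (use A BC in auto)
    then show "(\<Sum>q\<in>?S. \<Sum>l\<in>?S. (\<pi> q * \<pi> l * measure (\<mu> q l) A) * mm Q \<pi> \<mu> q B * mm Q \<pi> \<mu> l C)
      = (\<Sum>q\<in>?S. \<Sum>l\<in>?S. (\<pi>' q * \<pi>' l * measure (\<mu>' q l) A) * mm Q \<pi>' \<mu>' q B * mm Q \<pi>' \<mu>' l C)"
      by (simp only: path_identity[OF P1 A BC] path_identity[OF P2 A BC])
  qed
  have "\<exists>\<sigma>. \<sigma> ` ?S \<subseteq> ?S \<and> inj_on \<sigma> ?S \<and> (\<forall>j\<in>?S. \<pi>' j = \<pi> (\<sigma> j) \<and> (\<forall>A\<in>?X. mm Q \<pi>' \<mu>' j A = mm Q \<pi> \<mu> (\<sigma> j) A))"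
    by (rule tensor_unique[OF S ind1 ind2 pos1 pos2 UX U1 U2 T])
  then obtain \<sigma> where \<sigma>S: "\<sigma> ` ?S \<subseteq> ?S" and inj: "inj_on \<sigma> ?S"
    and \<sigma>pi: "\<And>j. j \<in> ?S \<Longrightarrow> \<pi>' j = \<pi> (\<sigma> j)"
    and \<sigma>m: "\<And>j A. j \<in> ?S \<Longrightarrow> A \<in> ?X \<Longrightarrow> mm Q \<pi>' \<mu>' j A = mm Q \<pi> \<mu> (\<sigma> j) A"
    by blast
  obtain g where g: "\<And>k. k \<in> ?S \<Longrightarrow> snd ` set (g k) \<subseteq> ?X"
    "\<And>k i. k \<in> ?S \<Longrightarrow> i \<in> ?S \<Longrightarrow> ap (g k) (mm Q \<pi> \<mu> i) = (if i = k then 1 else 0)"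
    using dual_exists[OF S ind1] by blast
  have apd: "ap (g (\<sigma> q)) (mm Q \<pi>' \<mu>' a) = (if a = q then 1 else 0)" if "q \<in> ?S" "a \<in> ?S" for q a
  proof -
    have sq: "\<sigma> q \<in> ?S" using \<sigma>S that by blast
    have sa: "\<sigma> a \<in> ?S" using \<sigma>S that by blast
    have "ap (g (\<sigma> q)) (mm Q \<pi>' \<mu>' a) = ap (g (\<sigma> q)) (mm Q \<pi> \<mu> (\<sigma> a))"
      by (rule ap_cong[OF g(1)[OF sq]]) (use \<sigma>m that in auto)
    also have "\<dots> = (if \<sigma> a = \<sigma> q then 1 else 0)" using g(2)[OF sq sa] .
    also have "\<dots> = (if a = q then 1 else 0)" using inj that by (auto dest: inj_onD)
    finally show ?thesis .
  qed
  have mu_eq: "measure (\<mu>' q l) A = measure (\<mu> (\<sigma> q) (\<sigma> l)) A"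
    if ql: "q \<in> ?S" "l \<in> ?S" and A: "A \<in> ?X" for q l A
  proof -
    have sq: "\<sigma> q \<in> ?S" using \<sigma>S ql(1) by blast
    have sl: "\<sigma> l \<in> ?S" using \<sigma>S ql(2) by blast
    have "(\<Sum>a\<in>?S. \<Sum>b\<in>?S. (\<pi> a * \<pi> b * measure (\<mu> a b) A) * ap (g (\<sigma> q)) (mm Q \<pi> \<mu> a) * ap (g (\<sigma> l)) (mm Q \<pi> \<mu> b))
      = (\<Sum>a\<in>?S. \<Sum>b\<in>?S. (\<pi>' a * \<pi>' b * measure (\<mu>' a b) A) * ap (g (\<sigma> q)) (mm Q \<pi>' \<mu>' a) * ap (g (\<sigma> l)) (mm Q \<pi>' \<mu>' b))"
      by (rule contract_double[OF g(1)[OF sq] g(1)[OF sl] K[OF A]])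
    moreover have "(\<Sum>a\<in>?S. \<Sum>b\<in>?S. (\<pi> a * \<pi> b * measure (\<mu> a b) A) * ap (g (\<sigma> q)) (mm Q \<pi> \<mu> a) * ap (g (\<sigma> l)) (mm Q \<pi> \<mu> b))
       = \<pi> (\<sigma> q) * \<pi> (\<sigma> l) * measure (\<mu> (\<sigma> q) (\<sigma> l)) A"
      by (rule double_delta[OF S sq sl]) (use g(2) sq sl in auto)
    moreover have "(\<Sum>a\<in>?S. \<Sum>b\<in>?S. (\<pi>' a * \<pi>' b * measure (\<mu>' a b) A) * ap (g (\<sigma> q)) (mm Q \<pi>' \<mu>' a) * ap (g (\<sigma> l)) (mm Q \<pi>' \<mu>' b))
       = \<pi>' q * \<pi>' l * measure (\<mu>' q l) A"
      by (rule double_delta[OF S ql]) (use apd ql in auto)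
    ultimately have "\<pi> (\<sigma> q) * \<pi> (\<sigma> l) * measure (\<mu> (\<sigma> q) (\<sigma> l)) A = \<pi> (\<sigma> q) * \<pi> (\<sigma> l) * measure (\<mu>' q l) A"
      using \<sigma>pi[OF ql(1)] \<sigma>pi[OF ql(2)] by simp
    moreover have "\<pi> (\<sigma> q) > 0" "\<pi> (\<sigma> l) > 0" using pos1 sq sl by auto
    ultimately show ?thesis by simp
  qed
  have meq: "\<mu>' q l = \<mu> (\<sigma> q) (\<sigma> l)" if ql: "q \<in> ?S" "l \<in> ?S" for q l
  proof -
    have sq: "\<sigma> q \<in> ?S" using \<sigma>S ql(1) by blast
    have sl: "\<sigma> l \<in> ?S" using \<sigma>S ql(2) by blast
    have L1: "np_edge_law (\<mu>' q l)" using P2 ql by (simp add: np_wrgmm_param_def)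
    have L2: "np_edge_law (\<mu> (\<sigma> q) (\<sigma> l))" using P1 sq sl by (simp add: np_wrgmm_param_def)
    have f1: "finite_measure (\<mu>' q l)" using edge_law_facts(1)[OF L1] prob_space.finite_measure by blast
    have f2: "finite_measure (\<mu> (\<sigma> q) (\<sigma> l))" using edge_law_facts(1)[OF L2] prob_space.finite_measure by blast
    show ?thesis
    proof (rule measure_eqI)
      show "sets (\<mu>' q l) = sets (\<mu> (\<sigma> q) (\<sigma> l))" using edge_law_facts(2)[OF L1] edge_law_facts(2)[OF L2] by simp
      fix A assume "A \<in> sets (\<mu>' q l)"
      then have A: "A \<in> ?X" using edge_law_facts(2)[OF L1] by simp
      show "emeasure (\<mu>' q l) A = emeasure (\<mu> (\<sigma> q) (\<sigma> l)) A"
        using finite_measure.emeasure_eq_measure[OF f1] finite_measure.emeasure_eq_measure[OF f2] mu_eq[OF ql A]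
        by simp
    qed
  qed
  define \<sigma>' where "\<sigma>' x = (if x \<in> ?S then \<sigma> x else x)" for x
  have img: "\<sigma> ` ?S = ?S" by (rule endo_inj_surj[OF S \<sigma>S inj])
  have "bij_betw \<sigma> ?S ?S" using img inj by (simp add: bij_betw_def)
  then have "bij_betw \<sigma>' ?S ?S" by (rule bij_betw_cong[THEN iffD1, rotated]) (simp add: \<sigma>'_def)
  then have perm: "\<sigma>' permutes ?S" by (rule bij_imp_permutes) (auto simp: \<sigma>'_def)
  show ?thesis
  proof (intro exI[of _ \<sigma>'] conjI ballI)
    show "\<sigma>' permutes ?S" by (rule perm)
    fix q assume q: "q \<in> ?S"
    show "\<pi>' q = \<pi> (\<sigma>' q)" using \<sigma>pi[OF q] q by (simp add: \<sigma>'_def)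
    fix l assume l: "l \<in> ?S"
    show "\<mu>' q l = \<mu> (\<sigma>' q) (\<sigma>' l)" using meq[OF q l] q l by (simp add: \<sigma>'_def)
  qed
qed

end
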